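(* Let $\mathcal{H}$ be a complex Hilbert space and $B,C\in\mathcal{B}(\mathcal{H})$. If $|B||C^*|=|B^*||C|=0$, then $$w^2\left(\begin{bmatrix}0 & B\\ C & 0\end{bmatrix}\right)=\frac14\max\left\{\big\||B|^2+|C^*|^2\big\|,\ \big\||B^*|^2+|C|^2\big\|\right\}.$$
   Context: $\mathcal{B}(\mathcal{H})$ is the algebra of bounded linear operators on $\mathcal{H}$ with operator norm $\|\cdot\|$. For $A\in\mathcal{B}(\mathcal{H})$, $A^*$ is the adjoint, $|A|=(A^*A)^{1/2}$, $|A^*|=(AA^* )^{1/2}$, and $w(A)=\sup_{\|x\|=1}|\langle Ax,x\rangle|$ is the numerical radius. The operator matrix $\begin{bmatrix}A&B\\C&D\end{bmatrix}$ acts on $\mathcal{H}\oplus\mathcal{H}$ by $(x_1,x_2)\mapsto(Ax_1+Bx_2,\,Cx_1+Dx_2)$; $0$ denotes the zero operator. *)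

theory Defs
  imports "HOL-Analysis.Analysis"
begin

text \<open>Convention: the inner product is conjugate-linear in the first and linear in the
second argument.\<close>

class complex_vector = real_vector +
  fixes scaleC :: "complex \<Rightarrow> 'a \<Rightarrow> 'a"
  assumes scaleC_add_right: "scaleC a (x + y) = scaleC a x + scaleC a y"
    and scaleC_add_left: "scaleC (a + b) x = scaleC a x + scaleC b x"
    and scaleC_scaleC: "scaleC a (scaleC b x) = scaleC (a * b) x"
    and scaleC_one: "scaleC 1 x = x"
    and scaleR_scaleC: "scaleR r x = scaleC (complex_of_real r) x"

class complex_inner = complex_vector + real_normed_vector +
  fixes cinner :: "'a \<Rightarrow> 'a \<Rightarrow> complex"
  assumes cinner_commute: "cinner x y = cnj (cinner y x)"
    and cinner_add_left: "cinner (x + y) z = cinner x z + cinner y z"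
    and cinner_scaleC_left: "cinner (scaleC r x) y = cnj r * cinner x y"
    and cinner_nonneg: "Im (cinner x x) = 0 \<and> 0 \<le> Re (cinner x x)"
    and cinner_eq_zero_iff: "cinner x x = 0 \<longleftrightarrow> x = 0"
    and norm_eq_sqrt_cinner: "norm x = sqrt (Re (cinner x x))"

class chilbert_space = complex_inner + complete_space

definition bounded_clinear :: "('a::complex_inner \<Rightarrow> 'b::complex_inner) \<Rightarrow> bool" where
  "bounded_clinear f \<longleftrightarrow>
     (\<forall>x y. f (x + y) = f x + f y) \<and> (\<forall>c x. f (scaleC c x) = scaleC c (f x)) \<and>
     (\<exists>K. \<forall>x. norm (f x) \<le> norm x * K)"

definition adj :: "('a::complex_inner \<Rightarrow> 'a) \<Rightarrow> ('a \<Rightarrow> 'a)" where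
  "adj T = (THE S. bounded_clinear S \<and> (\<forall>x y. cinner (T x) y = cinner x (S y)))"

definition positive_op :: "('a::complex_inner \<Rightarrow> 'a) \<Rightarrow> bool" where
  "positive_op P \<longleftrightarrow> bounded_clinear P \<and>
     (\<forall>x. Im (cinner (P x) x) = 0 \<and> 0 \<le> Re (cinner (P x) x))"

definition opabs :: "('a::complex_inner \<Rightarrow> 'a) \<Rightarrow> ('a \<Rightarrow> 'a)" where
  "opabs T = (THE P. positive_op P \<and> P \<circ> P = adj T \<circ> T)"

definition opmat2 :: "('a \<Rightarrow> 'a::complex_inner) \<Rightarrow> ('a \<Rightarrow> 'a) \<Rightarrow> ('a \<Rightarrow> 'a) \<Rightarrow> ('a \<Rightarrow> 'a)
    \<Rightarrow> ('a \<times> 'a \<Rightarrow> 'a \<times> 'a)" where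
  "opmat2 A B C D = (\<lambda>(x1, x2). (A x1 + B x2, C x1 + D x2))"

definition dsum_inner :: "'a::complex_inner \<times> 'a \<Rightarrow> 'a \<times> 'a \<Rightarrow> complex" where
  "dsum_inner x y = cinner (fst x) (fst y) + cinner (snd x) (snd y)"

definition dsum_norm :: "'a::complex_inner \<times> 'a \<Rightarrow> real" where
  "dsum_norm x = sqrt ((norm (fst x))\<^sup>2 + (norm (snd x))\<^sup>2)"

text \<open>Numerical radius of an operator on \<open>H \<oplus> H\<close>:
  \<open>w(T) = sup {|\<langle>Tx,x\<rangle>| : \<parallel>x\<parallel> = 1}\<close>; 0 is added to the set so that the
  (degenerate) zero space gets \<open>w = 0\<close>; otherwise this does not change the supremum.\<close>
definition numrad2 :: "('a::complex_inner \<times> 'a \<Rightarrow> 'a \<times> 'a) \<Rightarrow> real" where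
  "numrad2 T = Sup (insert 0 ((\<lambda>x. cmod (dsum_inner (T x) x)) ` {x. dsum_norm x = 1}))"

end

theory Submission
  imports Defs
begin



lemma scaleC_zero_left[simp]: "scaleC 0 (x::'a::complex_vector) = 0"
proof -
  have "scaleC 0 x = scaleC (complex_of_real 0) x" by simp
  also have "\<dots> = scaleR 0 x" by (rule scaleR_scaleC[symmetric])
  finally show ?thesis by simp
qed
lemma scaleC_zero_right[simp]: "scaleC a (0::'a::complex_vector) = 0"
proof -
  have "scaleC a 0 + scaleC a 0 = scaleC a 0 + 0" by (simp flip: scaleC_add_right)
  thus ?thesis by simp
qed
lemma scaleC_minus_right: "scaleC a (- x::'a::complex_vector) = - scaleC a x"
proof -
  have "scaleC a (- x) + scaleC a x = 0" by (simp flip: scaleC_add_right)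
  thus ?thesis by (simp add: eq_neg_iff_add_eq_0)
qed
lemma scaleC_diff_right: "scaleC a (x - y::'a::complex_vector) = scaleC a x - scaleC a y"
  by (simp only: diff_conv_add_uminus scaleC_add_right scaleC_minus_right)
lemma scaleC_minus_left: "scaleC (- a) (x::'a::complex_vector) = - scaleC a x"
proof -
  have "scaleC (- a) x + scaleC a x = 0" by (simp flip: scaleC_add_left)
  thus ?thesis by (simp add: eq_neg_iff_add_eq_0)
qed
lemma scaleC_diff_left: "scaleC (a - b) (x::'a::complex_vector) = scaleC a x - scaleC b x"
  by (simp only: diff_conv_add_uminus scaleC_add_left scaleC_minus_left)
lemma scaleC_of_real: "scaleC (complex_of_real r) x = scaleR r (x::'a::complex_vector)"
  by (simp add: scaleR_scaleC)

lemma cinner_add_right: "cinner x (y + z) = cinner x y + cinner x (z::'a::complex_inner)"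
  by (subst (1 2 3) cinner_commute) (simp add: cinner_add_left)
lemma cinner_scaleC_right: "cinner x (scaleC r y) = r * cinner x (y::'a::complex_inner)"
  by (subst (1 2) cinner_commute) (simp add: cinner_scaleC_left)
lemma cinner_zero_left[simp]: "cinner 0 (x::'a::complex_inner) = 0"
proof -
  have "cinner 0 x + cinner 0 x = cinner 0 x + 0" by (simp flip: cinner_add_left)
  thus ?thesis by simp
qed
lemma cinner_zero_right[simp]: "cinner x (0::'a::complex_inner) = 0"
  by (subst cinner_commute) simp
lemma cinner_minus_left: "cinner (- x) (y::'a::complex_inner) = - cinner x y"
proof -
  have "cinner (- x) y + cinner x y = 0" by (simp flip: cinner_add_left)
  thus ?thesis by (simp add: eq_neg_iff_add_eq_0)
qed
lemma cinner_minus_right: "cinner x (- y::'a::complex_inner) = - cinner x y"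
proof -
  have "cinner x (- y) + cinner x y = 0" by (simp flip: cinner_add_right)
  thus ?thesis by (simp add: eq_neg_iff_add_eq_0)
qed
lemma cinner_diff_left: "cinner (x - y) (z::'a::complex_inner) = cinner x z - cinner y z"
  by (simp only: cinner_add_left cinner_minus_left diff_conv_add_uminus)
lemma cinner_diff_right: "cinner x (y - z::'a::complex_inner) = cinner x y - cinner x z"
  by (simp only: cinner_add_right cinner_minus_right diff_conv_add_uminus)
lemma cinner_scaleR_left: "cinner (scaleR r x) (y::'a::complex_inner) = of_real r * cinner x y"
  by (simp add: scaleR_scaleC cinner_scaleC_left)
lemma cinner_scaleR_right: "cinner x (scaleR r y::'a::complex_inner) = of_real r * cinner x y"
  by (simp add: scaleR_scaleC cinner_scaleC_right)

lemma cinner_self: "cinner x (x::'a::complex_inner) = complex_of_real ((norm x)\<^sup>2)"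
proof -
  have "Im (cinner x x) = 0" "0 \<le> Re (cinner x x)" using cinner_nonneg by auto
  moreover have "(norm x)\<^sup>2 = Re (cinner x x)" using norm_eq_sqrt_cinner[of x] calculation by simp
  ultimately show ?thesis by (simp add: complex_eq_iff)
qed

lemma cinner_sum_left: "cinner (sum f A) (y::'a::complex_inner) = (\<Sum>a\<in>A. cinner (f a) y)"
  by (induction A rule: infinite_finite_induct) (auto simp: cinner_add_left)

lemma cmod_sq_complex: "complex_of_real ((cmod a)\<^sup>2) = a * cnj a"
  by (metis complex_norm_square)

lemma norm_scaleC: "norm (scaleC a (x::'a::complex_inner)) = cmod a * norm x"
proof -
  have "complex_of_real ((norm (scaleC a x))\<^sup>2) = cnj a * a * complex_of_real ((norm x)\<^sup>2)"
    by (simp add: cinner_self[symmetric] cinner_scaleC_left cinner_scaleC_right del: of_real_power)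
  also have "cnj a * a = complex_of_real ((cmod a)\<^sup>2)"
    by (simp only: cmod_sq_complex mult.commute)
  finally have "complex_of_real ((norm (scaleC a x))\<^sup>2) = complex_of_real ((cmod a * norm x)\<^sup>2)"
    by (simp only: of_real_mult power_mult_distrib)
  hence "(norm (scaleC a x))\<^sup>2 = (cmod a * norm x)\<^sup>2" using of_real_eq_iff by blast
  thus ?thesis by (simp add: power2_eq_iff_nonneg)
qed

lemma norm_add_sq: "(norm (x + y))\<^sup>2 = (norm x)\<^sup>2 + (norm y)\<^sup>2 + 2 * Re (cinner x (y::'a::complex_inner))"
proof -
  have "complex_of_real ((norm (x+y))\<^sup>2) = cinner x x + cinner y y + (cinner x y + cinner y x)"
    by (simp add: cinner_self[symmetric] cinner_add_left cinner_add_right del: of_real_power)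
  also have "cinner x y + cinner y x = complex_of_real (2 * Re (cinner x y))"
    by (subst cinner_commute[of y x]) (simp add: complex_add_cnj)
  finally have "complex_of_real ((norm (x+y))\<^sup>2) = complex_of_real ((norm x)\<^sup>2 + (norm y)\<^sup>2 + 2 * Re (cinner x y))"
    by (simp only: cinner_self of_real_add)
  thus ?thesis using of_real_eq_iff by blast
qed

lemma norm_diff_sq: "(norm (x - y))\<^sup>2 = (norm x)\<^sup>2 + (norm y)\<^sup>2 - 2 * Re (cinner x (y::'a::complex_inner))"
  using norm_add_sq[of x "-y"] by (simp add: cinner_minus_right)

lemma Cauchy_Schwarz: "cmod (cinner x y) \<le> norm x * norm (y::'a::complex_inner)"
proof (cases "y = 0")
  case True thus ?thesis by simp
next
  case False
  define a where "a = cinner y x"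
  define n where "n = (norm y)\<^sup>2"
  have n: "n > 0" using False by (simp add: n_def)
  define t where "t = a / complex_of_real n"
  define k where "k = a * cnj a"
  have xy: "cinner x y = cnj a" by (simp add: a_def cinner_commute[of x y])
  have yy: "cinner y y = complex_of_real n" by (simp add: n_def cinner_self del: of_real_power)
  have e1: "t * cinner x y = k / complex_of_real n" by (simp add: xy t_def k_def)
  have e2: "cnj t * cinner y x = k / complex_of_real n" by (simp add: t_def k_def a_def[symmetric] mult.commute)
  have e3: "cnj t * t * cinner y y = k / complex_of_real n" using n
    by (simp add: yy t_def k_def mult.commute)
  have "complex_of_real ((norm (x - scaleC t y))\<^sup>2) = cinner x x - t * cinner x y - cnj t * cinner y x + cnj t * t * cinner y y"
  proof -
    have "cinner (x - scaleC t y) (x - scaleC t y) = cinner x x - t * cinner x y - cnj t * cinner y x + cnj t * t * cinner y y"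
      by (simp add: cinner_diff_left cinner_diff_right cinner_scaleC_left cinner_scaleC_right algebra_simps)
    thus ?thesis by (simp only: cinner_self)
  qed
  also have "\<dots> = complex_of_real ((norm x)\<^sup>2 - (cmod a)\<^sup>2 / n)"
    unfolding e1 e2 e3 by (simp only: k_def cmod_sq_complex[symmetric] cinner_self of_real_diff of_real_divide) simp
  finally have "(norm (x - scaleC t y))\<^sup>2 = (norm x)\<^sup>2 - (cmod a)\<^sup>2 / n" using of_real_eq_iff by blast
  hence "0 \<le> (norm x)\<^sup>2 - (cmod a)\<^sup>2 / n" by (metis zero_le_power2)
  hence "(cmod a)\<^sup>2 \<le> (norm x)\<^sup>2 * n" using n by (simp add: field_simps)
  hence "(cmod a)\<^sup>2 \<le> (norm x * norm y)\<^sup>2" by (simp add: n_def power_mult_distrib)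
  hence "cmod a \<le> norm x * norm y" by (simp add: power2_le_iff_abs_le)
  thus ?thesis by (simp add: a_def cinner_commute[of x y])
qed




lemma bcl_add: "bounded_clinear f \<Longrightarrow> f (x + y) = f x + f y"
  by (simp add: bounded_clinear_def)
lemma bcl_scaleC: "bounded_clinear f \<Longrightarrow> f (scaleC c x) = scaleC c (f x)"
  by (simp add: bounded_clinear_def)
lemma bcl_bound: "bounded_clinear f \<Longrightarrow> \<exists>K\<ge>0. \<forall>x. norm (f x) \<le> norm x * K"
proof -
  assume "bounded_clinear f"
  then obtain K where K: "\<forall>x. norm (f x) \<le> norm x * K" by (auto simp: bounded_clinear_def)
  have "\<forall>x. norm (f x) \<le> norm x * max K 0"
    using K by (metis max.cobounded1 mult_left_mono norm_ge_zero order_trans)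
  thus ?thesis by (intro exI[of _ "max K 0"]) auto
qed
lemma bcl_scaleR: "bounded_clinear f \<Longrightarrow> f (scaleR r x) = scaleR r (f x)"
  by (simp add: scaleR_scaleC bcl_scaleC)
lemma bcl_linear: "bounded_clinear f \<Longrightarrow> bounded_linear f"
proof -
  assume f: "bounded_clinear f"
  then obtain K where "\<forall>x. norm (f x) \<le> norm x * K" by (auto simp: bounded_clinear_def)
  thus ?thesis using f by (intro bounded_linear_intro[of f K]) (auto simp: bcl_add bcl_scaleR)
qed
lemma bcl_zero[simp]: "bounded_clinear f \<Longrightarrow> f 0 = 0"
  using bcl_linear linear_simps(3) by blast
lemma bcl_diff: "bounded_clinear f \<Longrightarrow> f (x - y) = f x - f y"
  using bcl_linear linear_simps(2) by blast
lemma bcl_minus: "bounded_clinear f \<Longrightarrow> f (- y) = - f y"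
  using bcl_linear linear_simps(4) by blast
lemma bcl_onorm: "bounded_clinear f \<Longrightarrow> norm (f x) \<le> onorm f * norm x"
  using bcl_linear onorm by blast
lemma bcl_intro:
  assumes "\<And>x y. f (x + y) = f x + f y" "\<And>c x. f (scaleC c x) = scaleC c (f x)"
    "\<And>x. norm (f x) \<le> norm x * K"
  shows "bounded_clinear f"
  using assms by (auto simp: bounded_clinear_def)

lemma bcl_comp: "bounded_clinear f \<Longrightarrow> bounded_clinear g \<Longrightarrow> bounded_clinear (f \<circ> g)"
proof -
  assume f: "bounded_clinear f" and g: "bounded_clinear g"
  have "norm ((f \<circ> g) x) \<le> norm x * (onorm g * onorm f)" for x
  proof -
    have "norm (f (g x)) \<le> onorm f * norm (g x)" using bcl_onorm[OF f] .
    also have "\<dots> \<le> onorm f * (onorm g * norm x)"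
      using bcl_onorm[OF g] onorm_pos_le[OF bcl_linear[OF f]] by (simp add: mult_left_mono)
    finally show ?thesis by (simp add: mult_ac)
  qed
  thus ?thesis using f g by (intro bcl_intro) (auto simp: bcl_add bcl_scaleC)
qed

lemma bcl_plus: "bounded_clinear f \<Longrightarrow> bounded_clinear g \<Longrightarrow> bounded_clinear (\<lambda>x. f x + g x)"
proof -
  assume f: "bounded_clinear f" and g: "bounded_clinear g"
  have "norm (f x + g x) \<le> norm x * (onorm f + onorm g)" for x
    using norm_triangle_ineq[of "f x" "g x"] bcl_onorm[OF f, of x] bcl_onorm[OF g, of x]
    by (simp add: algebra_simps)
  thus ?thesis using f g by (intro bcl_intro) (auto simp: bcl_add bcl_scaleC scaleC_add_right)
qed

lemma bcl_minus_op: "bounded_clinear f \<Longrightarrow> bounded_clinear g \<Longrightarrow> bounded_clinear (\<lambda>x. f x - g x)"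
proof -
  assume f: "bounded_clinear f" and g: "bounded_clinear g"
  have "norm (f x - g x) \<le> norm x * (onorm f + onorm g)" for x
    using norm_triangle_ineq4[of "f x" "g x"] bcl_onorm[OF f, of x] bcl_onorm[OF g, of x]
    by (simp add: algebra_simps)
  thus ?thesis using f g by (intro bcl_intro) (auto simp: bcl_add bcl_scaleC scaleC_diff_right)
qed

lemma bcl_id: "bounded_clinear (\<lambda>x. x)"
  by (rule bcl_intro[where K=1]) auto

lemma scaleR_scaleC_comm: "scaleR r (scaleC c x) = scaleC c (scaleR r (x::'a::complex_vector))"
  by (simp add: scaleR_scaleC scaleC_scaleC mult.commute)

lemma bcl_scale_op: "bounded_clinear f \<Longrightarrow> bounded_clinear (\<lambda>x. scaleR r (f x))"
proof -
  assume f: "bounded_clinear f"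
  have "norm (scaleR r (f x)) \<le> norm x * (\<bar>r\<bar> * onorm f)" for x
    using bcl_onorm[OF f, of x] by (simp add: mult_left_mono mult_ac)
  thus ?thesis using f
    by (intro bcl_intro[where K="\<bar>r\<bar> * onorm f"]) (auto simp: bcl_add bcl_scaleC scaleR_scaleC_comm scaleR_add_right)
qed

lemma cinner_ext_left: "(\<And>x. cinner a x = cinner b x) \<Longrightarrow> a = (b::'a::complex_inner)"
  by (metis cinner_diff_left cinner_eq_zero_iff diff_self eq_iff_diff_eq_0)
lemma cinner_ext_right: "(\<And>x. cinner x a = cinner x b) \<Longrightarrow> a = (b::'a::complex_inner)"
  by (metis cinner_diff_right cinner_eq_zero_iff diff_self eq_iff_diff_eq_0)


lemma cmod_sq_complex': "cnj a * a = complex_of_real ((cmod a)\<^sup>2)"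
  by (simp only: cmod_sq_complex mult.commute)

lemma riesz:
  fixes g :: "'a::chilbert_space \<Rightarrow> complex"
  assumes gadd: "\<And>x y. g (x + y) = g x + g y" and gsc: "\<And>c x. g (scaleC c x) = c * g x"
    and gb: "\<And>x. cmod (g x) \<le> norm x * K"
  shows "\<exists>z. \<forall>x. g x = cinner z x"
proof (cases "\<forall>x. g x = 0")
  case True thus ?thesis by (intro exI[of _ 0]) simp
next
  case False
  have lin: "bounded_linear g"
    by (rule bounded_linear_intro[of g K]) (auto simp: gadd scaleR_scaleC gsc scaleR_conv_of_real gb)
  define M where "M = onorm g"
  have gM: "\<And>x. cmod (g x) \<le> M * norm x" using onorm[OF lin] by (simp add: M_def)
  have "g \<noteq> (\<lambda>x. 0)" using False by auto
  hence Mpos: "M > 0" using onorm_pos_lt[OF lin] M_def by auto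
  have g0: "g 0 = 0" using gsc[of 0 0] by simp
  have approx: "\<exists>x r. norm x = 1 \<and> g x = complex_of_real r \<and> M - e < r" if e: "0 < e" "e \<le> M" for e
  proof -
    have "\<exists>v. (M - e) * norm v < cmod (g v)"
    proof (rule ccontr)
      assume "\<not> ?thesis"
      hence "\<And>v. norm (g v) \<le> (M - e) * norm v" by (simp add: not_less)
      hence "onorm g \<le> M - e" using e by (intro onorm_bound) auto
      thus False using e M_def by simp
    qed
    then obtain v where v: "(M - e) * norm v < cmod (g v)" by blast
    have "0 \<le> (M - e) * norm v" using e by simp
    hence gv: "g v \<noteq> 0" using v by auto
    hence vn: "v \<noteq> 0" using g0 by auto
    hence nv: "norm v > 0" by simp
    define c where "c = cnj (g v) / complex_of_real (cmod (g v) * norm v)"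
    define x where "x = scaleC c v"
    have "norm x = 1" using gv vn by (simp add: x_def c_def norm_scaleC norm_divide norm_mult)
    moreover have "g x = complex_of_real (cmod (g v) / norm v)"
    proof -
      have "g x = cnj (g v) * g v / complex_of_real (cmod (g v) * norm v)"
        by (simp add: x_def gsc c_def)
      also have "\<dots> = complex_of_real ((cmod (g v))\<^sup>2 / (cmod (g v) * norm v))"
        by (simp only: cmod_sq_complex' of_real_divide)
      also have "(cmod (g v))\<^sup>2 / (cmod (g v) * norm v) = cmod (g v) / norm v"
        using gv by (simp add: power2_eq_square)
      finally show ?thesis .
    qed
    moreover have "M - e < cmod (g v) / norm v" using v nv by (simp add: field_simps)
    ultimately show ?thesis by blast
  qed
  define d where "d = (\<lambda>n. inverse (real (Suc n)))"
  have d_pos: "0 < d n" for n by (simp add: d_def)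
  have d_le1: "d n \<le> 1" for n by (simp add: d_def inverse_le_1_iff)
  have d_mono: "n \<le> m \<Longrightarrow> d m \<le> d n" for n m by (simp add: d_def le_imp_inverse_le)
  have ex: "\<forall>n. \<exists>p. norm (fst p) = 1 \<and> g (fst p) = complex_of_real (snd p) \<and> M - M * d n < snd p"
  proof
    fix n
    have "0 < M * d n" "M * d n \<le> M" using Mpos d_pos[of n] d_le1[of n] by (auto simp: mult_le_cancel_left1)
    from approx[OF this] obtain x r where "norm x = 1 \<and> g x = complex_of_real r \<and> M - M * d n < r" by blast
    thus "\<exists>p. norm (fst p) = 1 \<and> g (fst p) = complex_of_real (snd p) \<and> M - M * d n < snd p"
      by (intro exI[of _ "(x, r)"]) simp
  qed
  from choice[OF ex] obtain P where P: "\<And>n. norm (fst (P n)) = 1 \<and> g (fst (P n)) = complex_of_real (snd (P n)) \<and> M - M * d n < snd (P n)"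
    by blast
  define xs where "xs = (\<lambda>n. fst (P n))"
  define rs where "rs = (\<lambda>n. snd (P n))"
  have xs1: "norm (xs n) = 1" and gxs: "g (xs n) = complex_of_real (rs n)" and rsl: "M - M * d n < rs n" for n
    using P[of n] by (auto simp: xs_def rs_def)
  have rsu: "rs n \<le> M" for n using gM[of "xs n"] gxs[of n] xs1[of n] by auto
  have key: "(norm (xs n - xs m))\<^sup>2 \<le> 4 * (d n + d m)" for n m
  proof -
    have "M * (2 - (d n + d m)) < rs n + rs m" using rsl[of n] rsl[of m] by (simp add: algebra_simps)
    also have "rs n + rs m \<le> cmod (g (xs n + xs m))" using gxs by (simp add: gadd flip: of_real_add)
    also have "\<dots> \<le> M * norm (xs n + xs m)" by (rule gM)
    finally have A: "2 - (d n + d m) < norm (xs n + xs m)" using Mpos by simp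
    have B: "0 \<le> 2 - (d n + d m)" using d_le1[of n] d_le1[of m] by simp
    have "(2 - (d n + d m))\<^sup>2 \<le> (norm (xs n + xs m))\<^sup>2" using A B by (intro power_mono) auto
    moreover have "(norm (xs n - xs m))\<^sup>2 + (norm (xs n + xs m))\<^sup>2 = 4"
      using norm_add_sq[of "xs n" "xs m"] norm_diff_sq[of "xs n" "xs m"] xs1[of n] xs1[of m] by simp
    moreover have "(2 - (d n + d m))\<^sup>2 \<ge> 4 - 4 * (d n + d m)"
    proof -
      have "(2 - (d n + d m))\<^sup>2 = 4 - 4 * (d n + d m) + (d n + d m)\<^sup>2" by (simp add: power2_eq_square algebra_simps)
      thus ?thesis by simp
    qed
    ultimately show ?thesis by linarith
  qed
  have "Cauchy xs"
  proof (rule metric_CauchyI)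
    fix e :: real assume e: "0 < e"
    obtain N where N: "inverse (real (Suc N)) < e\<^sup>2 / 8" using reals_Archimedean[of "e\<^sup>2/8"] e by auto
    show "\<exists>M. \<forall>m\<ge>M. \<forall>n\<ge>M. dist (xs m) (xs n) < e"
    proof (intro exI allI impI)
      fix m n assume mn: "N \<le> m" "N \<le> n"
      have "(norm (xs m - xs n))\<^sup>2 \<le> 4 * (d m + d n)" by (rule key)
      also have "\<dots> \<le> 4 * (d N + d N)" using d_mono[OF mn(1)] d_mono[OF mn(2)] by simp
      also have "\<dots> < e\<^sup>2" using N by (simp add: d_def)
      finally have "(norm (xs m - xs n))\<^sup>2 < e\<^sup>2" .
      hence "norm (xs m - xs n) < e" using e by (simp add: power_less_imp_less_base)
      thus "dist (xs m) (xs n) < e" by (simp add: dist_norm)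
    qed
  qed
  then obtain u where u: "xs \<longlonglongrightarrow> u" using Cauchy_convergent convergent_def by blast
  have "(\<lambda>n. norm (xs n)) \<longlonglongrightarrow> norm u" using u by (rule tendsto_norm)
  hence nu: "norm u = 1" using xs1 LIMSEQ_unique[of "\<lambda>n. 1::real"] by (simp add: xs1)
  have "(\<lambda>n. g (xs n)) \<longlonglongrightarrow> g u" using bounded_linear.tendsto[OF lin u] .
  moreover have "(\<lambda>n. g (xs n)) \<longlonglongrightarrow> complex_of_real M"
  proof -
    have "(\<lambda>n. M - M * d n) \<longlonglongrightarrow> M - M * 0"
      unfolding d_def by (intro tendsto_intros LIMSEQ_inverse_real_of_nat)
    hence l: "(\<lambda>n. M - M * d n) \<longlonglongrightarrow> M" by simp
    have "rs \<longlonglongrightarrow> M"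
      by (rule tendsto_sandwich[OF _ _ l tendsto_const]) (auto simp: rsu less_imp_le[OF rsl])
    hence "(\<lambda>n. complex_of_real (rs n)) \<longlonglongrightarrow> complex_of_real M" by (rule tendsto_of_real)
    thus ?thesis by (simp add: gxs)
  qed
  ultimately have gu: "g u = complex_of_real M" by (rule LIMSEQ_unique)
  have orth: "cinner u y = 0" if gy: "g y = 0" for y
  proof -
    have ge1: "1 \<le> norm (u + scaleC t y)" for t
    proof -
      have "M = cmod (g (u + scaleC t y))" using Mpos by (simp add: gadd gsc gy gu)
      also have "\<dots> \<le> M * norm (u + scaleC t y)" by (rule gM)
      finally show ?thesis using Mpos by simp
    qed
    define a where "a = cinner u y"
    define s where "s = 1 / ((norm y)\<^sup>2 + 1)"
    have p: "0 < (norm y)\<^sup>2 + 1" using zero_le_power2[of "norm y"] by linarith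
    have s: "0 < s" "s * (norm y)\<^sup>2 < 1" using p by (auto simp: s_def field_simps)
    define t where "t = - complex_of_real s * cnj a"
    have ge: "1 \<le> (norm (u + scaleC t y))\<^sup>2" using ge1[of t] by (simp add: one_le_power)
    have eq: "(norm (u + scaleC t y))\<^sup>2 = 1 + (cmod t)\<^sup>2 * (norm y)\<^sup>2 + 2 * Re (t * a)"
      by (simp add: norm_add_sq norm_scaleC nu cinner_scaleC_right a_def power_mult_distrib)
    have ct: "(cmod t)\<^sup>2 = s\<^sup>2 * (cmod a)\<^sup>2" using s by (simp add: t_def norm_mult power_mult_distrib)
    have rt: "Re (t * a) = - s * (cmod a)\<^sup>2"
    proof -
      have "t * a = - complex_of_real s * (cnj a * a)" by (simp add: t_def)
      also have "\<dots> = complex_of_real (- s * (cmod a)\<^sup>2)" by (simp only: cmod_sq_complex') simp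
      finally show ?thesis by simp
    qed
    define A where "A = (cmod a)\<^sup>2"
    define N where "N = (norm y)\<^sup>2"
    have "1 \<le> 1 + s\<^sup>2 * A * N + 2 * (- s * A)" using ge unfolding eq ct rt A_def N_def by simp
    moreover have "A * (s * (s * N - 2)) = s\<^sup>2 * A * N + 2 * (- s * A)" by (simp add: power2_eq_square algebra_simps)
    ultimately have "0 \<le> (cmod a)\<^sup>2 * (s * (s * (norm y)\<^sup>2 - 2))" unfolding A_def N_def by linarith
    moreover have "s * (s * (norm y)\<^sup>2 - 2) < 0" using s by (simp add: mult_pos_neg)
    ultimately have "(cmod a)\<^sup>2 \<le> 0"
    proof (intro leI notI)
      assume h: "0 \<le> (cmod a)\<^sup>2 * (s * (s * (norm y)\<^sup>2 - 2))" "s * (s * (norm y)\<^sup>2 - 2) < 0" "0 < (cmod a)\<^sup>2"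
      have "(cmod a)\<^sup>2 * (s * (s * (norm y)\<^sup>2 - 2)) < 0" using mult_pos_neg[OF h(3) h(2)] .
      thus False using h(1) by linarith
    qed
    thus ?thesis by (simp add: a_def)
  qed
  show ?thesis
  proof (intro exI allI)
    fix x
    define y where "y = x - scaleC (g x / complex_of_real M) u"
    have gdiff: "g (p - q) = g p - g q" for p q using gadd[of "p - q" q] by simp
    have "g y = 0" using Mpos by (simp add: y_def gdiff gsc gu)
    hence "cinner u y = 0" by (rule orth)
    hence "cinner u x = g x / complex_of_real M"
      using nu by (simp add: y_def cinner_diff_right cinner_scaleC_right cinner_self)
    thus "g x = cinner (scaleC (complex_of_real M) u) x" using Mpos by (simp add: cinner_scaleC_left)
  qed
qed




lemma sq_le_imp_le: fixes a b :: real assumes "a\<^sup>2 \<le> a * b" "0 \<le> a" "0 \<le> b" shows "a \<le> b"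
proof (cases "a = 0")
  case True thus ?thesis using assms by simp
next
  case False
  hence "0 < a" using assms by simp
  thus ?thesis using assms(1) by (simp add: power2_eq_square)
qed

lemma Re_cinner_self: "Re (cinner x x) = (norm (x::'a::complex_inner))\<^sup>2"
  by (simp add: cinner_self del: of_real_power)

lemma adj_exists:
  fixes T :: "'a::chilbert_space \<Rightarrow> 'a"
  assumes T: "bounded_clinear T"
  shows "\<exists>S. bounded_clinear S \<and> (\<forall>x y. cinner (T x) y = cinner x (S y))"
proof -
  have "\<forall>y. \<exists>z. \<forall>x. cinner y (T x) = cinner z x"
  proof
    fix y :: 'a
    show "\<exists>z. \<forall>x. cinner y (T x) = cinner z x"
    proof (rule riesz[where K="norm y * onorm T"])
      show "cinner y (T (x1 + x2)) = cinner y (T x1) + cinner y (T x2)" for x1 x2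
        by (simp add: bcl_add[OF T] cinner_add_right)
      show "cinner y (T (scaleC c x)) = c * cinner y (T x)" for c x
        by (simp add: bcl_scaleC[OF T] cinner_scaleC_right)
      show "cmod (cinner y (T x)) \<le> norm x * (norm y * onorm T)" for x
      proof -
        have "cmod (cinner y (T x)) \<le> norm y * norm (T x)" by (rule Cauchy_Schwarz)
        also have "\<dots> \<le> norm y * (onorm T * norm x)" by (rule mult_left_mono[OF bcl_onorm[OF T]]) simp
        finally show ?thesis by (simp add: mult_ac)
      qed
    qed
  qed
  from choice[OF this] obtain S where S: "\<And>y x. cinner y (T x) = cinner (S y) x" by blast
  have Sadd: "S (y1 + y2) = S y1 + S y2" for y1 y2
    by (rule cinner_ext_left) (simp add: S[symmetric] cinner_add_left)
  have Ssc: "S (scaleC c y) = scaleC c (S y)" for c y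
    by (rule cinner_ext_left) (simp add: S[symmetric] cinner_scaleC_left)
  have Sb: "norm (S y) \<le> norm y * onorm T" for y
  proof -
    have "(norm (S y))\<^sup>2 = Re (cinner y (T (S y)))" by (simp add: S Re_cinner_self)
    also have "\<dots> \<le> cmod (cinner y (T (S y)))" by (rule complex_Re_le_cmod)
    also have "\<dots> \<le> norm y * norm (T (S y))" by (rule Cauchy_Schwarz)
    also have "\<dots> \<le> norm y * (onorm T * norm (S y))" by (rule mult_left_mono[OF bcl_onorm[OF T]]) simp
    finally have "(norm (S y))\<^sup>2 \<le> norm (S y) * (norm y * onorm T)" by (simp add: mult_ac)
    thus ?thesis by (rule sq_le_imp_le) (auto intro!: mult_nonneg_nonneg onorm_pos_le bcl_linear T)
  qed
  have "bounded_clinear S" by (rule bcl_intro[OF Sadd Ssc Sb])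
  moreover have "\<forall>x y. cinner (T x) y = cinner x (S y)"
    by (metis S cinner_commute)
  ultimately show ?thesis by blast
qed

lemma adj_unique_ex:
  assumes "bounded_clinear (T::'a::chilbert_space \<Rightarrow> 'a)"
  shows "\<exists>!S. bounded_clinear S \<and> (\<forall>x y. cinner (T x) y = cinner x (S y))"
proof -
  obtain S where S: "bounded_clinear S \<and> (\<forall>x y. cinner (T x) y = cinner x (S y))"
    using adj_exists[OF assms] by blast
  show ?thesis
  proof (rule ex1I[of _ S])
    show "bounded_clinear S \<and> (\<forall>x y. cinner (T x) y = cinner x (S y))" by (rule S)
    fix S' assume S': "bounded_clinear S' \<and> (\<forall>x y. cinner (T x) y = cinner x (S' y))"
    show "S' = S"
    proof (rule ext, rule cinner_ext_right)
      fix y x show "cinner x (S' y) = cinner x (S y)" using S S' by metis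
    qed
  qed
qed

lemma adj_prop:
  assumes "bounded_clinear (T::'a::chilbert_space \<Rightarrow> 'a)"
  shows "bounded_clinear (adj T) \<and> (\<forall>x y. cinner (T x) y = cinner x (adj T y))"
  unfolding adj_def by (rule theI'[OF adj_unique_ex[OF assms]])

lemma adj_bcl: "bounded_clinear T \<Longrightarrow> bounded_clinear (adj (T::'a::chilbert_space \<Rightarrow> 'a))"
  using adj_prop by blast
lemma adj_inner: "bounded_clinear T \<Longrightarrow> cinner (T x) y = cinner x (adj (T::'a::chilbert_space \<Rightarrow> 'a) y)"
  using adj_prop by blast
lemma adj_inner2: "bounded_clinear T \<Longrightarrow> cinner (adj T x) y = cinner x ((T::'a::chilbert_space \<Rightarrow> 'a) y)"
  by (metis adj_inner cinner_commute)

lemma adj_eq: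
  assumes "bounded_clinear (T::'a::chilbert_space \<Rightarrow> 'a)" "bounded_clinear S"
    "\<And>x y. cinner (T x) y = cinner x (S y)"
  shows "adj T = S"
  unfolding adj_def by (rule the1_equality[OF adj_unique_ex[OF assms(1)]]) (use assms in blast)

lemma adj_adj: "bounded_clinear T \<Longrightarrow> adj (adj T) = (T::'a::chilbert_space \<Rightarrow> 'a)"
  by (rule adj_eq) (auto simp: adj_bcl adj_inner2)

lemma norm_adj_le: "bounded_clinear T \<Longrightarrow> norm (adj T y) \<le> onorm (T::'a::chilbert_space \<Rightarrow> 'a) * norm y"
proof -
  assume T: "bounded_clinear T"
  have "(norm (adj T y))\<^sup>2 = Re (cinner (T (adj T y)) y)" by (simp add: adj_inner[OF T] Re_cinner_self)
  also have "\<dots> \<le> cmod (cinner (T (adj T y)) y)" by (rule complex_Re_le_cmod)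
  also have "\<dots> \<le> norm (T (adj T y)) * norm y" by (rule Cauchy_Schwarz)
  also have "\<dots> \<le> (onorm T * norm (adj T y)) * norm y" by (rule mult_right_mono[OF bcl_onorm[OF T]]) simp
  finally have "(norm (adj T y))\<^sup>2 \<le> norm (adj T y) * (onorm T * norm y)" by (simp add: mult_ac)
  thus ?thesis by (rule sq_le_imp_le) (auto intro!: mult_nonneg_nonneg onorm_pos_le bcl_linear T)
qed

lemma onorm_adj: "bounded_clinear T \<Longrightarrow> onorm (adj T) = onorm (T::'a::chilbert_space \<Rightarrow> 'a)"
proof -
  assume T: "bounded_clinear T"
  have 1: "onorm (adj T) \<le> onorm T"
    by (rule onorm_bound) (auto intro: onorm_pos_le bcl_linear T norm_adj_le[OF T])
  have "onorm (adj (adj T)) \<le> onorm (adj T)"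
    by (rule onorm_bound) (auto intro: onorm_pos_le bcl_linear adj_bcl T norm_adj_le[OF adj_bcl[OF T]])
  thus ?thesis using 1 adj_adj[OF T] by simp
qed

lemma pos_selfadj:
  assumes P: "positive_op (P::'a::complex_inner \<Rightarrow> 'a)"
  shows "cinner (P x) y = cinner x (P y)"
proof -
  have bP: "bounded_clinear P" and im: "\<And>z. Im (cinner (P z) z) = 0" using P by (auto simp: positive_op_def)
  define A where "A = cinner (P x) y"
  define B where "B = cinner (P y) x"
  have xPy: "cinner x (P y) = cnj B" by (simp add: B_def cinner_commute[of x])
  have yPx: "cinner y (P x) = cnj A" by (simp add: A_def cinner_commute[of y])
  have 1: "Im (A + B) = 0"
  proof -
    have "cinner (P (x + y)) (x + y) = cinner (P x) x + cinner (P y) y + (A + B) + 0"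
      by (simp add: bcl_add[OF bP] cinner_add_left cinner_add_right A_def B_def algebra_simps)
    hence "Im (cinner (P (x + y)) (x + y)) = Im (cinner (P x) x) + Im (cinner (P y) y) + Im (A + B)" by simp
    thus ?thesis using im by simp
  qed
  have 2: "Re (A - B) = 0"
  proof -
    have "cinner (P (x + scaleC \<i> y)) (x + scaleC \<i> y) = cinner (P x) x + cinner (P y) y + \<i> * (A - B)"
      by (simp add: bcl_add[OF bP] bcl_scaleC[OF bP] cinner_add_left cinner_add_right
          cinner_scaleC_left cinner_scaleC_right A_def B_def algebra_simps)
    hence "Im (cinner (P (x + scaleC \<i> y)) (x + scaleC \<i> y)) = Im (cinner (P x) x) + Im (cinner (P y) y) + Re (A - B)" by simp
    thus ?thesis using im by simp
  qed
  have "A = cnj B" using 1 2 by (simp add: complex_eq_iff)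
  thus ?thesis by (simp add: A_def xPy)
qed

lemma pos_Re_nonneg: "positive_op P \<Longrightarrow> 0 \<le> Re (cinner (P x) x)"
  by (simp add: positive_op_def)
lemma pos_Im: "positive_op P \<Longrightarrow> Im (cinner (P x) x) = 0"
  by (simp add: positive_op_def)
lemma pos_bcl: "positive_op P \<Longrightarrow> bounded_clinear P"
  by (simp add: positive_op_def)

lemma pos_zero:
  assumes P: "positive_op (P::'a::complex_inner \<Rightarrow> 'a)" and z: "Re (cinner (P y) y) = 0"
  shows "P y = 0"
proof -
  have bP: "bounded_clinear P" using P by (rule pos_bcl)
  define q where "q = (norm (P y))\<^sup>2"
  define B where "B = Re (cinner (P (P y)) (P y))"
  have B: "0 \<le> B" using pos_Re_nonneg[OF P] by (simp add: B_def)
  have ineq: "0 \<le> 2 * t * q + t\<^sup>2 * B" for t :: real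
  proof -
    have "0 \<le> Re (cinner (P (y + scaleR t (P y))) (y + scaleR t (P y)))" by (rule pos_Re_nonneg[OF P])
    also have "cinner (P (y + scaleR t (P y))) (y + scaleR t (P y))
        = cinner (P y) y + of_real t * cinner (P y) (P y) + of_real t * cinner (P (P y)) y
          + of_real t * of_real t * cinner (P (P y)) (P y)"
      by (simp add: bcl_add[OF bP] bcl_scaleR[OF bP] cinner_add_left cinner_add_right
          cinner_scaleR_left cinner_scaleR_right algebra_simps)
    also have "cinner (P (P y)) y = cinner (P y) (P y)" by (rule pos_selfadj[OF P])
    finally show ?thesis using z by (simp add: q_def B_def Re_cinner_self power2_eq_square)
  qed
  have "q = 0"
  proof (rule ccontr)
    assume "q \<noteq> 0"
    hence qp: "0 < q" by (simp add: q_def)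
    define t where "t = - q / (B + 1)"
    have tn: "t < 0" using qp B by (simp add: t_def)
    have "B / (B + 1) \<le> 1" using B by simp
    hence "q * (B / (B + 1)) \<le> q * 1" using qp by (intro mult_left_mono) auto
    moreover have "t * B = - (q * (B / (B + 1)))" by (simp add: t_def)
    ultimately have "0 < 2 * q + t * B" using qp by simp
    hence "t * (2 * q + t * B) < 0" using tn by (simp add: mult_neg_pos)
    moreover have "2 * t * q + t\<^sup>2 * B = t * (2 * q + t * B)" by (simp add: power2_eq_square algebra_simps)
    ultimately have "2 * t * q + t\<^sup>2 * B < 0" by simp
    thus False using ineq[of t] by simp
  qed
  thus ?thesis by (simp add: q_def)
qed




function cf :: "nat \<Rightarrow> real" where
  "cf n = (if n = 0 then 0 else if n = 1 then 1/2 else (\<Sum>i\<in>{1..<n}. cf i * cf (n - i)) / 2)"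
  by auto
termination by (relation "Wellfounded.measure id") auto
declare cf.simps[simp del]

lemma cf0[simp]: "cf 0 = 0" by (simp add: cf.simps)
lemma cf1[simp]: "cf (Suc 0) = 1/2" by (simp add: cf.simps)
lemma cf_rec: "2 \<le> n \<Longrightarrow> cf n = (\<Sum>i\<in>{1..<n}. cf i * cf (n - i)) / 2"
  by (subst cf.simps) auto

lemma cf_nonneg: "0 \<le> cf n"
proof (induction n rule: less_induct)
  case (less n)
  show ?case
  proof (cases "n < 2")
    case True thus ?thesis by (cases n) (auto simp: cf.simps)
  next
    case False
    hence "cf n = (\<Sum>i\<in>{1..<n}. cf i * cf (n - i)) / 2" by (intro cf_rec) auto
    moreover have "0 \<le> (\<Sum>i\<in>{1..<n}. cf i * cf (n - i))"
      using less by (intro sum_nonneg mult_nonneg_nonneg) auto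
    ultimately show ?thesis by simp
  qed
qed

lemma cf_conv: "(\<Sum>i\<le>k. cf i * cf (k - i)) = 2 * cf k - (if k = 1 then 1 else 0)"
proof (cases "k < 2")
  case True thus ?thesis by (cases k) auto
next
  case False
  have "(\<Sum>i\<le>k. cf i * cf (k - i)) = (\<Sum>i\<in>{1..<k}. cf i * cf (k - i))"
  proof (rule sum.mono_neutral_right)
    show "\<forall>i\<in>{..k} - {1..<k}. cf i * cf (k - i) = 0"
    proof
      fix i assume "i \<in> {..k} - {1..<k}"
      hence "i = 0 \<or> i = k" by auto
      thus "cf i * cf (k - i) = 0" by auto
    qed
  qed auto
  also have "\<dots> = 2 * cf k" using False cf_rec[of k] by simp
  finally show ?thesis using False by simp
qed

lemma cf_psum_le: "(\<Sum>i\<le>N. cf i) \<le> 1"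
proof (induction N)
  case 0 thus ?case by simp
next
  case (Suc M)
  define N where "N = Suc M"
  define g where "g = (\<lambda>(i::nat, j::nat). cf i * cf j)"
  have "(\<Sum>k\<le>N. (\<Sum>i\<le>k. cf i * cf (k - i))) = (\<Sum>k\<le>N. 2 * cf k - (if k = 1 then 1 else 0))"
    by (simp add: cf_conv)
  also have "\<dots> = 2 * (\<Sum>k\<le>N. cf k) - (\<Sum>k\<le>N. (if k = 1 then 1 else 0))"
    by (simp add: sum_subtractf sum_distrib_left)
  also have "(\<Sum>k\<le>N. (if k = 1 then 1 else 0::real)) = 1"
    by (simp add: N_def sum.delta)
  finally have e1: "2 * (\<Sum>k\<le>N. cf k) - 1 = (\<Sum>k\<le>N. (\<Sum>i\<le>k. cf i * cf (k - i)))" by simp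
  have "(\<Sum>k\<le>N. (\<Sum>i\<le>k. cf i * cf (k - i))) = (\<Sum>(i,j)\<in>{(i,j). i + j \<le> N}. cf i * cf j)"
    by (rule sum.triangle_reindex_eq[symmetric])
  also have "\<dots> = sum g {(i,j). i + j \<le> N}" by (simp add: g_def)
  also have "\<dots> = sum g ({(i,j). i + j \<le> N} \<inter> {(i,j). 0 < i})"
  proof (rule sum.mono_neutral_right)
    have "{(i,j). i + j \<le> N} \<subseteq> {..N} \<times> {..N}" by auto
    thus "finite {(i,j). i + j \<le> N}" by (rule finite_subset) auto
    show "\<forall>p\<in>{(i, j). i + j \<le> N} - {(i, j). i + j \<le> N} \<inter> {(i, j). 0 < i}. g p = 0"
      by (auto simp: g_def) (metis cf0 gr0I)
  qed auto
  also have "\<dots> \<le> sum g ({..N} \<times> {..M})"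
    by (rule sum_mono2) (auto simp: g_def N_def intro!: mult_nonneg_nonneg cf_nonneg)
  also have "\<dots> = (\<Sum>i\<le>N. cf i) * (\<Sum>j\<le>M. cf j)"
    by (simp add: g_def sum_product sum.cartesian_product)
  also have "\<dots> \<le> (\<Sum>i\<le>N. cf i) * 1"
    using Suc.IH by (intro mult_left_mono) (auto intro!: sum_nonneg cf_nonneg)
  finally have "2 * (\<Sum>k\<le>N. cf k) - 1 \<le> (\<Sum>i\<le>N. cf i)" using e1 by simp
  thus ?case by (simp add: N_def)
qed

lemma cf_psum_le': "(\<Sum>i<n. cf i) \<le> 1"
proof (cases n)
  case 0 thus ?thesis by simp
next
  case (Suc m) thus ?thesis using cf_psum_le[of m] by (simp add: lessThan_Suc_atMost)
qed

lemma cf_summable: "summable cf"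
  by (rule summableI_nonneg_bounded[of _ 1]) (auto simp: cf_nonneg cf_psum_le')

lemma cf_suminf_le: "suminf cf \<le> 1"
  by (rule suminf_le_const[OF cf_summable cf_psum_le'])




lemma Cauchy_product_sums_blinfun:
  fixes a b :: "nat \<Rightarrow> 'a::banach \<Rightarrow>\<^sub>L 'a"
  assumes a: "summable (\<lambda>k. norm (a k))"
    and b: "summable (\<lambda>k. norm (b k))"
  shows "(\<lambda>k. \<Sum>i\<le>k. a i o\<^sub>L b (k - i)) sums ((\<Sum>k. a k) o\<^sub>L (\<Sum>k. b k))"
proof -
  let ?S1 = "\<lambda>n::nat. {..<n} \<times> {..<n}"
  let ?S2 = "\<lambda>n::nat. {(i,j). i + j < n}"
  have S1_mono: "\<And>m n. m \<le> n \<Longrightarrow> ?S1 m \<subseteq> ?S1 n" by auto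
  have S2_le_S1: "\<And>n. ?S2 n \<subseteq> ?S1 n" by auto
  have S1_le_S2: "\<And>n. ?S1 (n div 2) \<subseteq> ?S2 n" by auto
  have finite_S1: "\<And>n. finite (?S1 n)" by simp
  with S2_le_S1 have finite_S2: "\<And>n. finite (?S2 n)" by (rule finite_subset)
  let ?g = "\<lambda>(i,j). a i o\<^sub>L b j"
  let ?f = "\<lambda>(i,j). norm (a i) * norm (b j)"
  have f_nonneg: "\<And>x. 0 \<le> ?f x" by auto
  then have norm_sum_f: "\<And>A. norm (sum ?f A) = sum ?f A"
    unfolding real_norm_def
    by (simp only: abs_of_nonneg sum_nonneg [rule_format])
  have sp: "(\<Sum>i\<in>A. a i) o\<^sub>L (\<Sum>j\<in>B. b j) = (\<Sum>i\<in>A. \<Sum>j\<in>B. a i o\<^sub>L b j)" for A B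
    by (simp add: bounded_bilinear.sum_left[OF bounded_bilinear_blinfun_compose]
        bounded_bilinear.sum_right[OF bounded_bilinear_blinfun_compose]) (rule sum.swap)
  have "(\<lambda>n. (\<Sum>k<n. a k) o\<^sub>L (\<Sum>k<n. b k)) \<longlonglongrightarrow> ((\<Sum>k. a k) o\<^sub>L (\<Sum>k. b k))"
    by (intro bounded_bilinear.tendsto[OF bounded_bilinear_blinfun_compose]
        summable_LIMSEQ summable_norm_cancel [OF a] summable_norm_cancel [OF b])
  then have 1: "(\<lambda>n. sum ?g (?S1 n)) \<longlonglongrightarrow> ((\<Sum>k. a k) o\<^sub>L (\<Sum>k. b k))"
    by (simp only: sp sum.Sigma [rule_format] finite_lessThan)
  have "(\<lambda>n. (\<Sum>k<n. norm (a k)) * (\<Sum>k<n. norm (b k))) \<longlonglongrightarrow> (\<Sum>k. norm (a k)) * (\<Sum>k. norm (b k))"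
    using a b by (intro tendsto_mult summable_LIMSEQ)
  then have "(\<lambda>n. sum ?f (?S1 n)) \<longlonglongrightarrow> (\<Sum>k. norm (a k)) * (\<Sum>k. norm (b k))"
    by (simp only: sum_product sum.Sigma [rule_format] finite_lessThan)
  then have "convergent (\<lambda>n. sum ?f (?S1 n))"
    by (rule convergentI)
  then have Cauchy: "Cauchy (\<lambda>n. sum ?f (?S1 n))"
    by (rule convergent_Cauchy)
  have "Zfun (\<lambda>n. sum ?f (?S1 n - ?S2 n)) sequentially"
  proof (rule ZfunI, simp only: eventually_sequentially norm_sum_f)
    fix r :: real
    assume r: "0 < r"
    from CauchyD [OF Cauchy r] obtain N
      where "\<forall>m\<ge>N. \<forall>n\<ge>N. norm (sum ?f (?S1 m) - sum ?f (?S1 n)) < r" ..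
    then have "\<And>m n. N \<le> n \<Longrightarrow> n \<le> m \<Longrightarrow> norm (sum ?f (?S1 m - ?S1 n)) < r"
      by (simp only: sum_diff finite_S1 S1_mono)
    then have N: "\<And>m n. N \<le> n \<Longrightarrow> n \<le> m \<Longrightarrow> sum ?f (?S1 m - ?S1 n) < r"
      by (simp only: norm_sum_f)
    show "\<exists>N. \<forall>n\<ge>N. sum ?f (?S1 n - ?S2 n) < r"
    proof (intro exI allI impI)
      fix n
      assume "2 * N \<le> n"
      then have n: "N \<le> n div 2" by simp
      have "sum ?f (?S1 n - ?S2 n) \<le> sum ?f (?S1 n - ?S1 (n div 2))"
        by (intro sum_mono2 finite_Diff finite_S1 f_nonneg Diff_mono subset_refl S1_le_S2)
      also have "\<dots> < r"
        using n div_le_dividend by (rule N)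
      finally show "sum ?f (?S1 n - ?S2 n) < r" .
    qed
  qed
  then have "Zfun (\<lambda>n. sum ?g (?S1 n - ?S2 n)) sequentially"
    apply (rule Zfun_le [rule_format])
    apply (simp only: norm_sum_f)
    apply (rule order_trans [OF norm_sum sum_mono])
    apply (auto simp add: norm_blinfun_compose)
    done
  then have 2: "(\<lambda>n. sum ?g (?S1 n) - sum ?g (?S2 n)) \<longlonglongrightarrow> 0"
    unfolding tendsto_Zfun_iff diff_0_right
    by (simp only: sum_diff finite_S1 S2_le_S1)
  with 1 have "(\<lambda>n. sum ?g (?S2 n)) \<longlonglongrightarrow> ((\<Sum>k. a k) o\<^sub>L (\<Sum>k. b k))"
    by (rule Lim_transform2)
  then show ?thesis
    by (simp only: sums_def sum.triangle_reindex)
qed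




context chilbert_space begin
subclass banach ..
end

lemma bl_scaleC: "bounded_linear (\<lambda>x::'a::complex_inner. scaleC c x)"
  by (rule bounded_linear_intro[of _ "cmod c"])
    (auto simp: scaleC_add_right scaleR_scaleC_comm norm_scaleC mult.commute)

lemma bl_cinner_left: "bounded_linear (\<lambda>v::'a::complex_inner. cinner v x)"
  by (rule bounded_linear_intro[of _ "norm x"])
    (auto simp: cinner_add_left cinner_scaleR_left scaleR_conv_of_real Cauchy_Schwarz)

lemma bcl_bl_intro: "bounded_clinear Q \<Longrightarrow> bounded_linear Q"
  by (rule bcl_linear)

locale sqrt_ctx =
  fixes R :: "'a::chilbert_space \<Rightarrow> 'a"
  assumes Rb: "bounded_clinear R"
    and Rsa: "\<And>x y. cinner (R x) y = cinner x (R y)"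
    and Rc: "\<And>x. norm (R x) \<le> norm x"
begin

lemma pow_bcl: "bounded_clinear (R ^^ n)"
proof (induction n)
  case 0 thus ?case by (simp add: id_def bcl_id)
next
  case (Suc n)
  have "bounded_clinear (R \<circ> R ^^ n)" by (rule bcl_comp[OF Rb Suc.IH])
  thus ?case by (simp add: comp_def)
qed

lemma pow_norm: "norm ((R ^^ n) x) \<le> norm x"
  by (induction n) (auto intro: order_trans[OF Rc])

lemma pow_swap: "(R ^^ n) (R y) = R ((R ^^ n) y)"
  by (simp add: funpow_swap1)

lemma pow_sa: "cinner ((R ^^ n) x) y = cinner x ((R ^^ n) y)"
proof (induction n arbitrary: y)
  case 0 thus ?case by simp
next
  case (Suc n)
  have "cinner ((R ^^ Suc n) x) y = cinner ((R ^^ n) x) (R y)" by (simp add: Rsa)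
  also have "\<dots> = cinner x ((R ^^ n) (R y))" by (rule Suc.IH)
  also have "\<dots> = cinner x ((R ^^ Suc n) y)" by (simp add: pow_swap)
  finally show ?case .
qed

lemma pow_real: "Im (cinner ((R ^^ n) x) x) = 0"
proof -
  have "cinner ((R ^^ n) x) x = cnj (cinner ((R ^^ n) x) x)"
    by (subst (2) cinner_commute) (simp add: pow_sa)
  thus ?thesis by (metis Reals_cnj_iff complex_is_Real_iff)
qed

definition Pn :: "nat \<Rightarrow> 'a \<Rightarrow>\<^sub>L 'a" where "Pn n = Blinfun (R ^^ n)"

lemma Pn_apply: "blinfun_apply (Pn n) = R ^^ n"
  unfolding Pn_def by (rule bounded_linear_Blinfun_apply[OF bcl_linear[OF pow_bcl]])

lemma Pn_norm: "norm (Pn n) \<le> 1"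
  by (rule norm_blinfun_bound) (auto simp: Pn_apply pow_norm)

lemma Pn_comp: "Pn i o\<^sub>L Pn j = Pn (i + j)"
  by (rule blinfun_eqI) (simp add: Pn_apply funpow_add)

definition U :: "'a \<Rightarrow>\<^sub>L 'a" where "U = (\<Sum>n. cf n *\<^sub>R Pn n)"

lemma term_norm: "norm (cf n *\<^sub>R Pn n) \<le> cf n"
proof -
  have "norm (cf n *\<^sub>R Pn n) = cf n * norm (Pn n)" using cf_nonneg[of n] by simp
  also have "\<dots> \<le> cf n * 1" by (rule mult_left_mono[OF Pn_norm cf_nonneg])
  finally show ?thesis by simp
qed

lemma sumU_norm: "summable (\<lambda>n. norm (cf n *\<^sub>R Pn n))"
  by (rule summable_comparison_test[OF _ cf_summable]) (intro exI[of _ 0] allI impI, use term_norm in simp)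

lemma sumU: "(\<lambda>n. cf n *\<^sub>R Pn n) sums U"
  unfolding U_def by (rule summable_sums[OF summable_norm_cancel[OF sumU_norm]])

lemma UU: "U o\<^sub>L U = 2 *\<^sub>R U - Pn 1"
proof -
  have 1: "(\<lambda>k. \<Sum>i\<le>k. (cf i *\<^sub>R Pn i) o\<^sub>L (cf (k - i) *\<^sub>R Pn (k - i))) sums (U o\<^sub>L U)"
    using Cauchy_product_sums_blinfun[OF sumU_norm sumU_norm] by (simp add: U_def)
  have t: "(\<Sum>i\<le>k. (cf i *\<^sub>R Pn i) o\<^sub>L (cf (k - i) *\<^sub>R Pn (k - i)))
      = 2 *\<^sub>R (cf k *\<^sub>R Pn k) - (if k = 1 then Pn 1 else 0)" for k
  proof -
    have "(\<Sum>i\<le>k. (cf i *\<^sub>R Pn i) o\<^sub>L (cf (k - i) *\<^sub>R Pn (k - i)))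
        = (\<Sum>i\<le>k. (cf i * cf (k - i)) *\<^sub>R Pn k)"
    proof (rule sum.cong[OF refl])
      fix i assume "i \<in> {..k}"
      hence "i + (k - i) = k" by simp
      thus "(cf i *\<^sub>R Pn i) o\<^sub>L (cf (k - i) *\<^sub>R Pn (k - i)) = (cf i * cf (k - i)) *\<^sub>R Pn k"
        by (simp add: bounded_bilinear.scaleR_left[OF bounded_bilinear_blinfun_compose]
            bounded_bilinear.scaleR_right[OF bounded_bilinear_blinfun_compose] Pn_comp)
    qed
    also have "\<dots> = (\<Sum>i\<le>k. cf i * cf (k - i)) *\<^sub>R Pn k" by (simp add: scaleR_sum_left)
    also have "\<dots> = (2 * cf k - (if k = 1 then 1 else 0)) *\<^sub>R Pn k" by (simp add: cf_conv)
    also have "\<dots> = 2 *\<^sub>R (cf k *\<^sub>R Pn k) - (if k = 1 then Pn 1 else 0)"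
      by (simp add: scaleR_left_diff_distrib)
    finally show ?thesis .
  qed
  have 2: "(\<lambda>k. 2 *\<^sub>R (cf k *\<^sub>R Pn k) - (if k = 1 then Pn 1 else 0)) sums (2 *\<^sub>R U - Pn 1)"
    by (intro sums_diff sums_scaleR_right sumU) (rule sums_single[of 1 "\<lambda>_. Pn 1"])
  show ?thesis using 1 2 unfolding t by (rule sums_unique2)
qed

definition u :: "'a \<Rightarrow> 'a" where "u x = blinfun_apply U x"

lemma u_sums: "(\<lambda>n. cf n *\<^sub>R (R ^^ n) x) sums u x"
proof -
  have "(\<lambda>n. blinfun_apply (cf n *\<^sub>R Pn n) x) sums blinfun_apply U x"
    by (rule bounded_linear.sums[OF blinfun.bounded_linear_left sumU])
  thus ?thesis by (simp add: u_def Pn_apply blinfun.bilinear_simps)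
qed

lemma u_uu: "u (u x) = 2 *\<^sub>R u x - R x"
proof -
  have "u (u x) = blinfun_apply (U o\<^sub>L U) x" by (simp add: u_def)
  also have "\<dots> = 2 *\<^sub>R u x - R x" by (simp add: UU u_def blinfun.bilinear_simps Pn_apply)
  finally show ?thesis .
qed

lemma u_add: "u (x + y) = u x + u y" by (simp add: u_def blinfun.bilinear_simps)
lemma u_diff: "u (x - y) = u x - u y" by (simp add: u_def blinfun.bilinear_simps)
lemma u_scaleR: "u (r *\<^sub>R x) = r *\<^sub>R u x" by (simp add: u_def blinfun.bilinear_simps)
lemma u_norm: "norm (u x) \<le> norm U * norm x" by (simp add: u_def norm_blinfun)

lemma u_comm:
  assumes Q: "bounded_linear Q" and QR: "\<And>x. Q (R x) = R (Q x)"
  shows "Q (u x) = u (Q x)"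
proof -
  have Qp: "Q ((R ^^ n) x) = (R ^^ n) (Q x)" for n x
    by (induction n) (auto simp: QR)
  have "(\<lambda>n. Q (cf n *\<^sub>R (R ^^ n) x)) sums Q (u x)"
    by (rule bounded_linear.sums[OF Q u_sums])
  moreover have "(\<lambda>n. Q (cf n *\<^sub>R (R ^^ n) x)) = (\<lambda>n. cf n *\<^sub>R (R ^^ n) (Q x))"
    by (simp add: linear_simps(5)[OF Q] Qp)
  ultimately have "(\<lambda>n. cf n *\<^sub>R (R ^^ n) (Q x)) sums Q (u x)" by simp
  thus ?thesis using u_sums[of "Q x"] by (rule sums_unique2)
qed

lemma u_scaleC: "u (scaleC c x) = scaleC c (u x)"
proof -
  have "scaleC c (u x) = u (scaleC c x)"
  proof (rule u_comm[OF bl_scaleC])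
    show "scaleC c (R x) = R (scaleC c x)" for x by (simp add: bcl_scaleC[OF Rb])
  qed
  thus ?thesis by simp
qed

lemma u_inner: "Im (cinner (u x) x) = 0 \<and> Re (cinner (u x) x) \<le> (norm x)\<^sup>2"
proof -
  have s: "(\<lambda>n. cinner (cf n *\<^sub>R (R ^^ n) x) x) sums cinner (u x) x"
    by (rule bounded_linear.sums[OF bl_cinner_left u_sums])
  have si: "(\<lambda>n. Im (cinner (cf n *\<^sub>R (R ^^ n) x) x)) sums Im (cinner (u x) x)"
    by (rule bounded_linear.sums[OF bounded_linear_Im s])
  have "(\<lambda>n. Im (cinner (cf n *\<^sub>R (R ^^ n) x) x)) = (\<lambda>n. 0)"
    by (simp add: cinner_scaleR_left pow_real)
  hence "(\<lambda>n. 0::real) sums Im (cinner (u x) x)" using si by simp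
  hence im: "Im (cinner (u x) x) = 0" using sums_zero by (rule sums_unique2)
  have sr: "(\<lambda>n. Re (cinner (cf n *\<^sub>R (R ^^ n) x) x)) sums Re (cinner (u x) x)"
    by (rule bounded_linear.sums[OF bounded_linear_Re s])
  have le: "Re (cinner (cf n *\<^sub>R (R ^^ n) x) x) \<le> cf n * (norm x)\<^sup>2" for n
  proof -
    have "Re (cinner ((R ^^ n) x) x) \<le> cmod (cinner ((R ^^ n) x) x)" by (rule complex_Re_le_cmod)
    also have "\<dots> \<le> norm ((R ^^ n) x) * norm x" by (rule Cauchy_Schwarz)
    also have "\<dots> \<le> norm x * norm x" by (rule mult_right_mono[OF pow_norm]) simp
    finally have "Re (cinner ((R ^^ n) x) x) \<le> (norm x)\<^sup>2" by (simp add: power2_eq_square)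
    hence "cf n * Re (cinner ((R ^^ n) x) x) \<le> cf n * (norm x)\<^sup>2" by (rule mult_left_mono[OF _ cf_nonneg])
    thus ?thesis by (simp add: cinner_scaleR_left)
  qed
  have "Re (cinner (u x) x) \<le> suminf cf * (norm x)\<^sup>2"
    by (rule sums_le[OF le sr sums_mult2[OF summable_sums[OF cf_summable]]])
  also have "\<dots> \<le> 1 * (norm x)\<^sup>2" by (rule mult_right_mono[OF cf_suminf_le]) simp
  finally show ?thesis using im by simp
qed

definition s :: "'a \<Rightarrow> 'a" where "s x = x - u x"

lemma s_ss: "s (s x) = x - R x"
  by (simp add: s_def u_diff u_uu algebra_simps scaleR_2)

lemma s_bcl: "bounded_clinear s"
proof (rule bcl_intro[where K="1 + norm U"])
  show "s (x + y) = s x + s y" for x y by (simp add: s_def u_add algebra_simps)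
  show "s (scaleC c x) = scaleC c (s x)" for c x by (simp add: s_def u_scaleC scaleC_diff_right)
  show "norm (s x) \<le> norm x * (1 + norm U)" for x
    using norm_triangle_ineq4[of x "u x"] u_norm[of x] by (simp add: s_def algebra_simps)
qed

lemma s_pos: "positive_op s"
proof -
  have "Im (cinner (s x) x) = 0 \<and> 0 \<le> Re (cinner (s x) x)" for x
    using u_inner[of x] by (simp add: s_def cinner_diff_left Re_cinner_self cinner_self del: of_real_power)
  thus ?thesis using s_bcl by (simp add: positive_op_def)
qed

lemma s_comm:
  assumes Q: "bounded_linear Q" and QR: "\<And>x. Q (R x) = R (Q x)"
  shows "Q (s x) = s (Q x)"
  by (simp add: s_def linear_simps(2)[OF Q] u_comm[OF Q QR])

end




lemma pos_commuting_sqrt_unique: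
  fixes P Q :: "'a::complex_inner \<Rightarrow> 'a"
  assumes P: "positive_op P" and Q: "positive_op Q"
    and PP: "\<And>x. P (P x) = Q (Q x)" and comm: "\<And>x. P (Q x) = Q (P x)"
  shows "P = Q"
proof (rule ext)
  fix x
  have bP: "bounded_clinear P" and bQ: "bounded_clinear Q" using P Q by (auto intro: pos_bcl)
  define y where "y = P x - Q x"
  have "P y + Q y = (P (P x) - Q (Q x)) + (Q (P x) - P (Q x))"
    by (simp add: y_def bcl_diff[OF bP] bcl_diff[OF bQ] algebra_simps)
  also have "\<dots> = 0" by (simp add: PP comm)
  finally have "cinner (P y) y + cinner (Q y) y = 0" by (metis cinner_add_left cinner_zero_left)
  hence "Re (cinner (P y) y) + Re (cinner (Q y) y) = 0" by (metis plus_complex.sel(1) zero_complex.sel(1))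
  moreover have "0 \<le> Re (cinner (P y) y)" "0 \<le> Re (cinner (Q y) y)"
    using P Q by (auto intro: pos_Re_nonneg)
  ultimately have "Re (cinner (P y) y) = 0" "Re (cinner (Q y) y) = 0" by linarith+
  hence Py: "P y = 0" and Qy: "Q y = 0" using pos_zero[OF P] pos_zero[OF Q] by auto
  have "cinner y y = cinner x (P y) - cinner x (Q y)"
    by (simp add: y_def cinner_diff_left pos_selfadj[OF P] pos_selfadj[OF Q])
  hence "cinner y y = 0" by (simp add: Py Qy)
  hence "y = 0" by (simp add: cinner_eq_zero_iff)
  thus "P x = Q x" by (simp add: y_def)
qed

lemma sqrt_unique_ex:
  fixes T :: "'a::chilbert_space \<Rightarrow> 'a"
  assumes T: "bounded_clinear T"
  shows "\<exists>!P. positive_op P \<and> P \<circ> P = adj T \<circ> T"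
proof -
  define A where "A = adj T \<circ> T"
  have Ab: "bounded_clinear A" using bcl_comp[OF adj_bcl[OF T] T] by (simp add: A_def)
  have Ainner: "cinner x (A y) = cinner (T x) (T y)" for x y by (simp add: A_def adj_inner[OF T])
  have Asa: "cinner (A x) y = cinner x (A y)" for x y
  proof -
    have "cinner (A x) y = cnj (cinner y (A x))" by (rule cinner_commute)
    also have "\<dots> = cnj (cinner (T y) (T x))" by (simp add: Ainner)
    also have "\<dots> = cinner (T x) (T y)" by (rule cinner_commute[symmetric])
    finally show ?thesis by (simp add: Ainner)
  qed
  define k where "k = (onorm (adj T))\<^sup>2 + 1"
  have kpos: "k > 0" by (simp add: k_def add_nonneg_pos)
  define a where "a = 1 / k"
  have apos: "a > 0" using kpos by (simp add: a_def)
  define R where "R = (\<lambda>x. x - a *\<^sub>R A x)"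
  have Rb: "bounded_clinear R" unfolding R_def by (rule bcl_minus_op[OF bcl_id bcl_scale_op[OF Ab]])
  have Rsa: "cinner (R x) y = cinner x (R y)" for x y
    by (simp add: R_def cinner_diff_left cinner_diff_right cinner_scaleR_left cinner_scaleR_right Asa)
  have Rc: "norm (R x) \<le> norm x" for x
  proof -
    define t where "t = norm (T x)"
    have nA: "norm (A x) \<le> onorm (adj T) * t"
      using bcl_onorm[OF adj_bcl[OF T], of "T x"] by (simp add: A_def t_def)
    have "(norm (A x))\<^sup>2 \<le> (onorm (adj T) * t)\<^sup>2" using nA by (intro power_mono) auto
    also have "\<dots> = (k - 1) * t\<^sup>2" by (simp add: k_def power_mult_distrib)
    finally have nA2: "(norm (A x))\<^sup>2 \<le> (k - 1) * t\<^sup>2" .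
    have re: "Re (cinner x (a *\<^sub>R A x)) = a * t\<^sup>2"
      by (simp add: cinner_scaleR_right Ainner t_def Re_cinner_self)
    have "(norm (R x))\<^sup>2 = (norm x)\<^sup>2 + (a * norm (A x))\<^sup>2 - 2 * (a * t\<^sup>2)"
      using apos by (simp add: R_def norm_diff_sq re)
    also have "(a * norm (A x))\<^sup>2 = a\<^sup>2 * (norm (A x))\<^sup>2" by (simp add: power_mult_distrib)
    also have "\<dots> \<le> a\<^sup>2 * ((k - 1) * t\<^sup>2)" by (rule mult_left_mono[OF nA2]) simp
    also have "a\<^sup>2 * ((k - 1) * t\<^sup>2) = a * t\<^sup>2 * (a * (k - 1))" by (simp add: power2_eq_square)
    also have "\<dots> \<le> a * t\<^sup>2 * 1"
    proof (rule mult_left_mono)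
      show "a * (k - 1) \<le> 1" using kpos by (simp add: a_def field_simps)
      show "0 \<le> a * t\<^sup>2" using apos by simp
    qed
    finally have "(norm (R x))\<^sup>2 \<le> (norm x)\<^sup>2 - a * t\<^sup>2" by simp
    also have "\<dots> \<le> (norm x)\<^sup>2" using apos by simp
    finally show ?thesis by (simp add: power2_le_iff_abs_le)
  qed
  interpret sq: sqrt_ctx R using Rb Rsa Rc by unfold_locales auto
  define P where "P = (\<lambda>x. sqrt k *\<^sub>R sq.s x)"
  have sbcl: "bounded_clinear sq.s" by (rule sq.s_bcl)
  have Pb: "bounded_clinear P" unfolding P_def by (rule bcl_scale_op[OF sbcl])
  have Ppos: "positive_op P"
  proof -
    have "Im (cinner (P x) x) = 0 \<and> 0 \<le> Re (cinner (P x) x)" for x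
      using pos_Im[OF sq.s_pos, of x] pos_Re_nonneg[OF sq.s_pos, of x]
      using kpos by (simp add: P_def cinner_scaleR_left)
    thus ?thesis using Pb by (simp add: positive_op_def)
  qed
  have PP: "P (P x) = A x" for x
  proof -
    have "P (P x) = (sqrt k * sqrt k) *\<^sub>R sq.s (sq.s x)" by (simp add: P_def bcl_scaleR[OF sbcl])
    also have "\<dots> = k *\<^sub>R (a *\<^sub>R A x)" using kpos by (simp add: sq.s_ss, simp add: R_def)
    also have "\<dots> = A x" using kpos by (simp add: a_def)
    finally show ?thesis .
  qed
  show ?thesis
  proof (rule ex1I[of _ P])
    show "positive_op P \<and> P \<circ> P = adj T \<circ> T" using Ppos PP by (auto simp: A_def)
    fix Q assume Q: "positive_op Q \<and> Q \<circ> Q = adj T \<circ> T"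
    hence Qp: "positive_op Q" and QQ: "\<And>x. Q (Q x) = A x" by (auto simp: A_def dest: fun_cong)
    have bQ: "bounded_clinear Q" using Qp by (rule pos_bcl)
    have QA: "Q (A x) = A (Q x)" for x by (simp flip: QQ)
    have QR: "Q (R x) = R (Q x)" for x by (simp add: R_def bcl_diff[OF bQ] bcl_scaleR[OF bQ] QA)
    have Qs: "Q (sq.s x) = sq.s (Q x)" for x by (rule sq.s_comm[OF bcl_linear[OF bQ] QR])
    have QP: "Q (P x) = P (Q x)" for x by (simp add: P_def bcl_scaleR[OF bQ] Qs)
    show "Q = P"
      by (rule pos_commuting_sqrt_unique[OF Qp Ppos]) (auto simp: QQ PP QP)
  qed
qed

lemma opabs_prop:
  assumes "bounded_clinear (T::'a::chilbert_space \<Rightarrow> 'a)"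
  shows "positive_op (opabs T) \<and> opabs T \<circ> opabs T = adj T \<circ> T"
  unfolding opabs_def by (rule theI'[OF sqrt_unique_ex[OF assms]])

lemma opabs_sq: "bounded_clinear T \<Longrightarrow> opabs T (opabs T x) = adj T (T (x::'a::chilbert_space))"
  using opabs_prop by (metis comp_apply)

lemma opabs_pos: "bounded_clinear T \<Longrightarrow> positive_op (opabs (T::'a::chilbert_space \<Rightarrow> 'a))"
  using opabs_prop by blast




lemma onorm_le_sqrt:
  assumes Z: "bounded_clinear Z" and c: "0 \<le> c" and h: "\<And>x. (norm (Z x))\<^sup>2 \<le> c * (norm x)\<^sup>2"
  shows "onorm Z \<le> sqrt c"
proof (rule onorm_bound)
  show "0 \<le> sqrt c" using c by simp
  fix x
  have "(norm (Z x))\<^sup>2 \<le> (sqrt c * norm x)\<^sup>2" using h[of x] c by (simp add: power_mult_distrib)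
  thus "norm (Z x) \<le> sqrt c * norm x" by (rule power2_le_imp_le) (use c in simp)
qed

lemma kill_lemma:
  fixes X Y :: "'a::chilbert_space \<Rightarrow> 'a"
  assumes X: "bounded_clinear X" and Y: "bounded_clinear Y"
    and h: "opabs X \<circ> opabs Y = (\<lambda>_. 0)"
  shows "X (adj Y v) = 0"
proof -
  define P where "P = opabs X"
  define Q where "Q = opabs Y"
  have PP: "P (P x) = adj X (X x)" for x by (simp add: P_def opabs_sq[OF X])
  have QQ: "Q (Q x) = adj Y (Y x)" for x by (simp add: Q_def opabs_sq[OF Y])
  have PQ: "P (Q x) = 0" for x using fun_cong[OF h, of x] by (simp add: P_def Q_def)
  have bP: "bounded_clinear P" unfolding P_def by (rule pos_bcl[OF opabs_pos[OF X]])
  have XQ: "X (Q x) = 0" for x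
  proof -
    have "adj X (X (Q x)) = 0" by (simp flip: PP add: PQ bcl_zero[OF bP])
    hence "cinner (X (Q x)) (X (Q x)) = 0" by (simp add: adj_inner[OF X])
    thus ?thesis by (simp add: cinner_eq_zero_iff)
  qed
  have XYY: "X (adj Y (Y x)) = 0" for x by (simp flip: QQ add: XQ)
  have YX: "Y (adj X z) = 0" for z
  proof -
    have "cinner (Y (adj X z)) (Y (adj X z)) = cinner (adj X z) (adj Y (Y (adj X z)))"
      by (simp add: adj_inner[OF Y])
    also have "\<dots> = cinner z (X (adj Y (Y (adj X z))))" by (simp add: adj_inner2[OF X])
    also have "\<dots> = 0" by (simp add: XYY)
    finally show ?thesis by (simp add: cinner_eq_zero_iff)
  qed
  have "cinner (X (adj Y v)) z = 0" for z
    by (simp add: adj_inner[OF X] adj_inner2[OF Y] YX)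
  thus ?thesis using cinner_eq_zero_iff by blast
qed

lemma sum_sq_bound:
  fixes X Y :: "'a::chilbert_space \<Rightarrow> 'a"
  assumes X: "bounded_clinear X" and Y: "bounded_clinear Y" and XY: "\<And>v. X (Y v) = 0"
  defines "m \<equiv> max (onorm X) (onorm Y)"
  defines "F \<equiv> (\<lambda>x. adj X (X x) + Y (adj Y x))"
  shows "norm (F x) \<le> m\<^sup>2 * norm x"
    and "(norm (X x))\<^sup>2 + (norm (adj Y x))\<^sup>2 = Re (cinner (F x) x)"
    and "(norm (X x))\<^sup>2 + (norm (adj Y x))\<^sup>2 \<le> m\<^sup>2 * (norm x)\<^sup>2"
proof -
  have m0: "0 \<le> m" using onorm_pos_le[OF bcl_linear[OF X]] by (simp add: m_def)
  have mX: "onorm X \<le> m" and mY: "onorm Y \<le> m" by (auto simp: m_def)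
  show S: "(norm (X x))\<^sup>2 + (norm (adj Y x))\<^sup>2 = Re (cinner (F x) x)" for x
    by (simp add: F_def cinner_add_left adj_inner2[OF X] adj_inner[OF Y] Re_cinner_self)
  have cross: "cinner (adj X (X x)) (Y (adj Y x)) = 0" for x
    by (simp add: adj_inner2[OF X] XY)
  have Fn: "(norm (F x))\<^sup>2 \<le> m\<^sup>2 * ((norm (X x))\<^sup>2 + (norm (adj Y x))\<^sup>2)" for x
  proof -
    have "(norm (F x))\<^sup>2 = (norm (adj X (X x)))\<^sup>2 + (norm (Y (adj Y x)))\<^sup>2"
      by (simp add: F_def norm_add_sq cross)
    also have "(norm (adj X (X x)))\<^sup>2 \<le> (m * norm (X x))\<^sup>2"
    proof (rule power_mono)
      have "norm (adj X (X x)) \<le> onorm X * norm (X x)" by (rule norm_adj_le[OF X])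
      also have "\<dots> \<le> m * norm (X x)" by (rule mult_right_mono[OF mX]) simp
      finally show "norm (adj X (X x)) \<le> m * norm (X x)" .
    qed simp
    also have "(norm (Y (adj Y x)))\<^sup>2 \<le> (m * norm (adj Y x))\<^sup>2"
    proof (rule power_mono)
      have "norm (Y (adj Y x)) \<le> onorm Y * norm (adj Y x)" by (rule bcl_onorm[OF Y])
      also have "\<dots> \<le> m * norm (adj Y x)" by (rule mult_right_mono[OF mY]) simp
      finally show "norm (Y (adj Y x)) \<le> m * norm (adj Y x)" .
    qed simp
    finally show ?thesis by (simp add: power_mult_distrib algebra_simps)
  qed
  have Fb: "norm (F x) \<le> m\<^sup>2 * norm x" for x
  proof -
    have "(norm (F x))\<^sup>2 \<le> m\<^sup>2 * Re (cinner (F x) x)" using Fn[of x] S[of x] by simp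
    also have "\<dots> \<le> m\<^sup>2 * (norm (F x) * norm x)"
      by (rule mult_left_mono[OF order_trans[OF complex_Re_le_cmod Cauchy_Schwarz]]) simp
    finally have "(norm (F x))\<^sup>2 \<le> norm (F x) * (m\<^sup>2 * norm x)" by (simp add: mult_ac)
    thus ?thesis by (rule sq_le_imp_le) (use m0 in simp_all)
  qed
  thus "norm (F x) \<le> m\<^sup>2 * norm x" .
  have "Re (cinner (F x) x) \<le> norm (F x) * norm x" by (rule order_trans[OF complex_Re_le_cmod Cauchy_Schwarz])
  also have "\<dots> \<le> (m\<^sup>2 * norm x) * norm x" by (rule mult_right_mono[OF Fb]) simp
  finally show "(norm (X x))\<^sup>2 + (norm (adj Y x))\<^sup>2 \<le> m\<^sup>2 * (norm x)\<^sup>2"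
    using S[of x] by (simp add: power2_eq_square mult_ac)
qed

lemma onorm_F:
  fixes X Y :: "'a::chilbert_space \<Rightarrow> 'a"
  assumes X: "bounded_clinear X" and Y: "bounded_clinear Y" and XY: "\<And>v. X (Y v) = 0"
  shows "onorm (\<lambda>x. adj X (X x) + Y (adj Y x)) = (max (onorm X) (onorm Y))\<^sup>2"
proof -
  define m where "m = max (onorm X) (onorm Y)"
  define F where "F = (\<lambda>x. adj X (X x) + Y (adj Y x))"
  have L1: "norm (F x) \<le> m\<^sup>2 * norm x" for x using sum_sq_bound(1)[OF X Y XY] by (simp add: F_def m_def)
  have L2: "(norm (X x))\<^sup>2 + (norm (adj Y x))\<^sup>2 = Re (cinner (F x) x)" for x
    using sum_sq_bound(2)[OF X Y XY] by (simp add: F_def m_def)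
  have bF: "bounded_clinear F" unfolding F_def
    by (rule bcl_plus[OF bcl_comp[OF adj_bcl[OF X] X, unfolded comp_def] bcl_comp[OF Y adj_bcl[OF Y], unfolded comp_def]])
  have up: "onorm F \<le> m\<^sup>2" by (rule onorm_bound) (auto simp: L1)
  define f where "f = onorm F"
  have f0: "0 \<le> f" unfolding f_def by (rule onorm_pos_le[OF bcl_linear[OF bF]])
  have Sf: "(norm (X x))\<^sup>2 + (norm (adj Y x))\<^sup>2 \<le> f * (norm x)\<^sup>2" for x
  proof -
    have "Re (cinner (F x) x) \<le> norm (F x) * norm x" by (rule order_trans[OF complex_Re_le_cmod Cauchy_Schwarz])
    also have "\<dots> \<le> (f * norm x) * norm x" unfolding f_def by (rule mult_right_mono[OF bcl_onorm[OF bF]]) simp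
    finally show ?thesis using L2[of x] by (simp add: power2_eq_square mult_ac)
  qed
  have "onorm X \<le> sqrt f"
    by (rule onorm_le_sqrt[OF X f0]) (use Sf in \<open>smt (verit) zero_le_power2\<close>)
  moreover have "onorm (adj Y) \<le> sqrt f"
    by (rule onorm_le_sqrt[OF adj_bcl[OF Y] f0]) (use Sf in \<open>smt (verit) zero_le_power2\<close>)
  ultimately have "m \<le> sqrt f" by (simp add: m_def onorm_adj[OF Y])
  moreover have "0 \<le> m" using onorm_pos_le[OF bcl_linear[OF X]] by (simp add: m_def)
  ultimately have "m\<^sup>2 \<le> f" using f0 by (metis power_mono real_sqrt_pow2)
  thus ?thesis using up by (simp add: f_def F_def m_def)
qed




lemma cnj_sgn_mult: "cnj (sgn p) * p = complex_of_real (cmod p)"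
proof (cases "p = 0")
  case True thus ?thesis by simp
next
  case False
  have "cnj (sgn p) * p = cnj p * p / complex_of_real (cmod p)" by (simp add: sgn_eq)
  also have "\<dots> = complex_of_real ((cmod p)\<^sup>2 / cmod p)" by (simp only: cmod_sq_complex' of_real_divide)
  also have "(cmod p)\<^sup>2 / cmod p = cmod p" using False by (simp add: power2_eq_square)
  finally show ?thesis .
qed

lemma numrad_val:
  fixes B C :: "'a::chilbert_space \<Rightarrow> 'a"
  assumes B: "bounded_clinear B" and C: "bounded_clinear C"
    and BC: "\<And>v. B (C v) = 0" and CB: "\<And>v. C (B v) = 0"
  shows "numrad2 (opmat2 (\<lambda>_. 0) B C (\<lambda>_. 0)) = max (onorm B) (onorm C) / 2"
proof -
  define m where "m = max (onorm B) (onorm C)"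
  define T where "T = opmat2 (\<lambda>_. 0) B C (\<lambda>_. 0)"
  define V where "V = insert 0 ((\<lambda>x. cmod (dsum_inner (T x) x)) ` {x. dsum_norm x = 1})"
  have nr: "numrad2 T = Sup V" by (simp add: numrad2_def V_def)
  have m0: "0 \<le> m" using onorm_pos_le[OF bcl_linear[OF B]] by (simp add: m_def)
  have val: "dsum_inner (T (x1, x2)) (x1, x2) = cinner (B x2) x1 + cinner (C x1) x2" for x1 x2
    by (simp add: T_def opmat2_def dsum_inner_def)
  have inV: "cmod (cinner (B x2) x1 + cinner (C x1) x2) \<in> V"
    if "(norm x1)\<^sup>2 + (norm x2)\<^sup>2 = 1" for x1 x2
  proof -
    have "dsum_norm (x1, x2) = 1" using that by (simp add: dsum_norm_def)
    hence "cmod (dsum_inner (T (x1, x2)) (x1, x2)) \<in> V" unfolding V_def by blast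
    thus ?thesis by (simp add: val)
  qed
  have bnd: "v \<le> m / 2" if "v \<in> V" for v
  proof -
    from that consider "v = 0" | x1 x2 where "v = cmod (dsum_inner (T (x1, x2)) (x1, x2))" "dsum_norm (x1, x2) = 1"
      by (auto simp: V_def)
    thus ?thesis
    proof cases
      case 1 thus ?thesis using m0 by simp
    next
      case 2
      have n: "(norm x1)\<^sup>2 + (norm x2)\<^sup>2 = 1" using 2(2) by (simp add: dsum_norm_def)
      define u where "u = B x2"
      define w where "w = adj C x2"
      have uw: "cinner u w = 0" by (simp add: u_def w_def adj_inner[OF C, symmetric] CB)
      define p where "p = cinner u x1"
      define q where "q = cinner w x1"
      have v: "v = cmod (p + cnj q)"
        by (simp add: 2(1) val p_def q_def u_def w_def adj_inner[OF C] cinner_commute[of x1])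
      have "v \<le> cmod p + cmod q" using norm_triangle_ineq[of p "cnj q"] by (simp add: v)
      define z where "z = scaleC (sgn p) u + scaleC (sgn q) w"
      have "cinner z x1 = complex_of_real (cmod p + cmod q)"
        by (simp add: z_def cinner_add_left cinner_scaleC_left p_def[symmetric] q_def[symmetric] cnj_sgn_mult)
      hence "cmod (cinner z x1) = cmod p + cmod q" by (simp only: norm_of_real) simp
      hence "cmod p + cmod q = cmod (cinner z x1)" by simp
      also have "\<dots> \<le> norm z * norm x1" by (rule Cauchy_Schwarz)
      also have "norm z \<le> m * norm x2"
      proof -
        have "(norm z)\<^sup>2 = (cmod (sgn p) * norm u)\<^sup>2 + (cmod (sgn q) * norm w)\<^sup>2"
          by (simp add: z_def norm_add_sq norm_scaleC cinner_scaleC_left cinner_scaleC_right uw)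
        also have "\<dots> \<le> (norm u)\<^sup>2 + (norm w)\<^sup>2"
          by (intro add_mono) (auto simp: norm_sgn power_mult_distrib)
        also have "\<dots> \<le> m\<^sup>2 * (norm x2)\<^sup>2"
          using sum_sq_bound(3)[OF B C BC, of x2] by (simp add: u_def w_def m_def)
        also have "\<dots> = (m * norm x2)\<^sup>2" by (simp add: power_mult_distrib)
        finally show ?thesis by (rule power2_le_imp_le) (use m0 in simp)
      qed
      hence "norm z * norm x1 \<le> m * norm x2 * norm x1" by (rule mult_right_mono) simp
      also have "m * norm x2 * norm x1 \<le> m * (1 / 2)"
      proof -
        have "0 \<le> (norm x1 - norm x2)\<^sup>2" by simp
        hence h: "norm x2 * norm x1 \<le> 1 / 2" using n by (simp add: power2_eq_square algebra_simps)
        show ?thesis using mult_left_mono[OF h m0] by (simp add: mult.assoc)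
      qed
      finally show ?thesis using \<open>v \<le> cmod p + cmod q\<close> by simp
    qed
  qed
  have bdd: "bdd_above V" unfolding bdd_above_def by (intro exI[of _ "m/2"] ballI bnd)
  have up: "Sup V \<le> m / 2"
  proof (rule cSup_least)
    show "V \<noteq> {}" by (simp add: V_def)
    fix v assume "v \<in> V" thus "v \<le> m / 2" by (rule bnd)
  qed
  have w0: "0 \<le> Sup V" by (rule cSup_upper[OF _ bdd]) (simp add: V_def)
  have s2: "(1 / (sqrt 2 * r) * r)\<^sup>2 = 1 / 2" if "r > 0" for r :: real
    using that by (simp add: power2_eq_square)
  have lowB: "norm (B x) \<le> (2 * Sup V) * norm x" for x
  proof (cases "B x = 0")
    case True thus ?thesis using w0 by simp
  next
    case False
    hence x0: "x \<noteq> 0" using bcl_zero[OF B] by auto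
    define a where "a = 1 / (sqrt 2 * norm x)"
    define b where "b = 1 / (sqrt 2 * norm (B x))"
    have "(norm (b *\<^sub>R B x))\<^sup>2 + (norm (a *\<^sub>R x))\<^sup>2 = 1"
      using False x0 s2[of "norm x"] s2[of "norm (B x)"] by (simp add: a_def b_def)
    hence mem: "cmod (cinner (B (a *\<^sub>R x)) (b *\<^sub>R B x) + cinner (C (b *\<^sub>R B x)) (a *\<^sub>R x)) \<in> V" by (rule inV)
    have e2: "cinner (B (a *\<^sub>R x)) (b *\<^sub>R B x) + cinner (C (b *\<^sub>R B x)) (a *\<^sub>R x)
        = complex_of_real (a * b * (norm (B x))\<^sup>2)"
      by (simp add: bcl_scaleR[OF B] bcl_scaleR[OF C] CB cinner_scaleR_left cinner_scaleR_right cinner_self)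
    have e3: "a * b * (norm (B x))\<^sup>2 = norm (B x) / (2 * norm x)"
      using False x0 by (simp add: a_def b_def power2_eq_square)
    have "cmod (cinner (B (a *\<^sub>R x)) (b *\<^sub>R B x) + cinner (C (b *\<^sub>R B x)) (a *\<^sub>R x)) = norm (B x) / (2 * norm x)"
      by (simp only: e2 norm_of_real e3) simp
    hence "norm (B x) / (2 * norm x) \<in> V" using mem by simp
    hence "norm (B x) / (2 * norm x) \<le> Sup V" by (rule cSup_upper[OF _ bdd])
    thus ?thesis using x0 by (simp add: field_simps)
  qed
  have lowC: "norm (C x) \<le> (2 * Sup V) * norm x" for x
  proof (cases "C x = 0")
    case True thus ?thesis using w0 by simp
  next
    case False
    hence x0: "x \<noteq> 0" using bcl_zero[OF C] by auto
    define a where "a = 1 / (sqrt 2 * norm x)"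
    define b where "b = 1 / (sqrt 2 * norm (C x))"
    have "(norm (a *\<^sub>R x))\<^sup>2 + (norm (b *\<^sub>R C x))\<^sup>2 = 1"
      using False x0 s2[of "norm x"] s2[of "norm (C x)"] by (simp add: a_def b_def)
    hence mem: "cmod (cinner (B (b *\<^sub>R C x)) (a *\<^sub>R x) + cinner (C (a *\<^sub>R x)) (b *\<^sub>R C x)) \<in> V" by (rule inV)
    have e2: "cinner (B (b *\<^sub>R C x)) (a *\<^sub>R x) + cinner (C (a *\<^sub>R x)) (b *\<^sub>R C x)
        = complex_of_real (a * b * (norm (C x))\<^sup>2)"
      by (simp add: bcl_scaleR[OF B] bcl_scaleR[OF C] BC cinner_scaleR_left cinner_scaleR_right cinner_self)
    have e3: "a * b * (norm (C x))\<^sup>2 = norm (C x) / (2 * norm x)"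
      using False x0 by (simp add: a_def b_def power2_eq_square)
    have "cmod (cinner (B (b *\<^sub>R C x)) (a *\<^sub>R x) + cinner (C (a *\<^sub>R x)) (b *\<^sub>R C x)) = norm (C x) / (2 * norm x)"
      by (simp only: e2 norm_of_real e3) simp
    hence "norm (C x) / (2 * norm x) \<in> V" using mem by simp
    hence "norm (C x) / (2 * norm x) \<le> Sup V" by (rule cSup_upper[OF _ bdd])
    thus ?thesis using x0 by (simp add: field_simps)
  qed
  have "onorm B \<le> 2 * Sup V" by (rule onorm_bound) (use w0 lowB in auto)
  moreover have "onorm C \<le> 2 * Sup V" by (rule onorm_bound) (use w0 lowC in auto)
  ultimately have "m \<le> 2 * Sup V" by (simp add: m_def)
  hence "Sup V = m / 2" using up by simp
  thus ?thesis by (simp add: nr[unfolded T_def] m_def)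
qed

theorem mainTheorem7:
  fixes B C :: "'a::chilbert_space \<Rightarrow> 'a"
  assumes "bounded_clinear B" and "bounded_clinear C"
    and "opabs B \<circ> opabs (adj C) = (\<lambda>_. 0)"
    and "opabs (adj B) \<circ> opabs C = (\<lambda>_. 0)"
  shows "(numrad2 (opmat2 (\<lambda>_. 0) B C (\<lambda>_. 0)))\<^sup>2 =
           1/4 * max (onorm (\<lambda>x. opabs B (opabs B x) + opabs (adj C) (opabs (adj C) x)))
                     (onorm (\<lambda>x. opabs (adj B) (opabs (adj B) x) + opabs C (opabs C x)))"
proof -
  note B = assms(1) and C = assms(2)
  have B': "bounded_clinear (adj B)" and C': "bounded_clinear (adj C)" using B C by (auto intro: adj_bcl)
  have BC: "B (C v) = 0" for v using kill_lemma[OF B C' assms(3), of v] by (simp add: adj_adj[OF C])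
  have B'C': "adj B (adj C v) = 0" for v using kill_lemma[OF B' C assms(4), of v] .
  have CB: "C (B v) = 0" for v
  proof -
    have "cinner (C (B v)) z = 0" for z by (simp add: adj_inner[OF C] adj_inner[OF B] B'C')
    thus ?thesis using cinner_eq_zero_iff by blast
  qed
  define m where "m = max (onorm B) (onorm C)"
  have L: "numrad2 (opmat2 (\<lambda>_. 0) B C (\<lambda>_. 0)) = m / 2"
    using numrad_val[OF B C BC CB] by (simp add: m_def)
  have R1: "(\<lambda>x. opabs B (opabs B x) + opabs (adj C) (opabs (adj C) x)) = (\<lambda>x. adj B (B x) + C (adj C x))"
    by (simp add: opabs_sq[OF B] opabs_sq[OF C'] adj_adj[OF C])
  have R2: "(\<lambda>x. opabs (adj B) (opabs (adj B) x) + opabs C (opabs C x))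
      = (\<lambda>x. adj (adj B) (adj B x) + adj C (adj (adj C) x))"
    by (simp add: opabs_sq[OF B'] opabs_sq[OF C] adj_adj[OF C])
  have o1: "onorm (\<lambda>x. adj B (B x) + C (adj C x)) = m\<^sup>2"
    using onorm_F[OF B C BC] by (simp add: m_def)
  have o2: "onorm (\<lambda>x. adj (adj B) (adj B x) + adj C (adj (adj C) x)) = m\<^sup>2"
    using onorm_F[OF B' C' B'C'] by (simp add: m_def onorm_adj[OF B] onorm_adj[OF C])
  show ?thesis unfolding L R1 R2 o1 o2 by (simp add: power_divide)
qed



end
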